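(* Let $T>0$. For each $p\ge1$ and $q\ge1$ there exists a constant $C_{p,q,T}>0$ (independent of $N$ and $s$) such that $$\mathbb E\bigl[(\widetilde Z^N(s))^p\bigr]\le C_{p,q,T}\,N^{-q/2}\qquad\text{for all } s\in[0,T],\ N\in\mathbb N.$$
   Context: Model. Fix $\tau>0$, $\mu\ge 0$, $N\in\mathbb N$, and write $L=\lfloor \tau N\rfloor$. The state space is $\Omega_N=[0,\infty)^{L+1}$, with elements $x=(x_{-L},\dots,x_0)$. Define $\theta_N^\pm:\Omega_N\to\Omega_N$ by $(\theta_N^\pm x)_j=x_{j+1}$ for $-L\le j<0$, $(\theta_N^+x)_0=x_0(1+\frac1N)$, $(\theta_N^-x)_0=\max\{x_0(1-\frac{x_{-L}}{N^2}),0\}$. Let $\xi^N=(\xi^N(n))_{n\ge0}$ be the discrete-time Markov chain on $\Omega_N$ moving from $x$ to $\theta_N^+x$ or $\theta_N^-x$ with probability $1/2$ each, with $\xi^N_j(0)=\mu N$ for all $j$. Let $(\sigma_n)_{n\ge1}$ be i.i.d. Exp(1), independent of $\xi^N$, $J_0=0$, $J_n=\sigma_1+\dots+\sigma_n$, and $X^N(t)=\xi^N(n)$ for $t\in[J_n,J_{n+1})$. Define $Z^N(t)=X^N_{-L}(Nt)/N$ for $t\ge0$ and $\widetilde Z^N(t)=Z^N(t)-\min\{Z^N(t),N\}$. *)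

theory Defs
  imports "HOL-Probability.Probability"
begin

text \<open>Window length L = floor(tau N).  States x = (x_{-L},...,x_0) are encoded as
  functions int => real, meaningful on the indices -L..0 (set to 0 elsewhere).\<close>

definition Lw :: "real \<Rightarrow> nat \<Rightarrow> nat" where
  "Lw \<tau> N = nat \<lfloor>\<tau> * real N\<rfloor>"

definition theta_plus :: "real \<Rightarrow> nat \<Rightarrow> (int \<Rightarrow> real) \<Rightarrow> (int \<Rightarrow> real)" where
  "theta_plus \<tau> N x = (\<lambda>j. if - int (Lw \<tau> N) \<le> j \<and> j < 0 then x (j + 1)
      else if j = 0 then x 0 * (1 + 1 / real N) else 0)"

definition theta_minus :: "real \<Rightarrow> nat \<Rightarrow> (int \<Rightarrow> real) \<Rightarrow> (int \<Rightarrow> real)" where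
  "theta_minus \<tau> N x = (\<lambda>j. if - int (Lw \<tau> N) \<le> j \<and> j < 0 then x (j + 1)
      else if j = 0 then max (x 0 * (1 - x (- int (Lw \<tau> N)) / (real N)^2)) 0 else 0)"

primrec xi :: "real \<Rightarrow> real \<Rightarrow> nat \<Rightarrow> (nat \<Rightarrow> bool) \<Rightarrow> nat \<Rightarrow> (int \<Rightarrow> real)" where
  "xi \<tau> \<mu> N c 0 = (\<lambda>j. if - int (Lw \<tau> N) \<le> j \<and> j \<le> 0 then \<mu> * real N else 0)"
| "xi \<tau> \<mu> N c (Suc n) = (if c n then theta_plus \<tau> N (xi \<tau> \<mu> N c n)
                                else theta_minus \<tau> N (xi \<tau> \<mu> N c n))"

text \<open>Jump times J_n = sigma_1 + ... + sigma_n; here sg i plays the role of sigma_{i+1}.\<close>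
definition Jt :: "(nat \<Rightarrow> real) \<Rightarrow> nat \<Rightarrow> real" where
  "Jt sg n = (\<Sum>i<n. sg i)"

definition Xc :: "real \<Rightarrow> real \<Rightarrow> nat \<Rightarrow> (nat \<Rightarrow> bool) \<Rightarrow> (nat \<Rightarrow> real) \<Rightarrow> real \<Rightarrow> (int \<Rightarrow> real)" where
  "Xc \<tau> \<mu> N c sg t = xi \<tau> \<mu> N c (THE n. Jt sg n \<le> t \<and> t < Jt sg (Suc n))"

definition ZN :: "real \<Rightarrow> real \<Rightarrow> nat \<Rightarrow> (nat \<Rightarrow> bool) \<Rightarrow> (nat \<Rightarrow> real) \<Rightarrow> real \<Rightarrow> real" where
  "ZN \<tau> \<mu> N c sg t = Xc \<tau> \<mu> N c sg (real N * t) (- int (Lw \<tau> N)) / real N"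

definition ZNtilde :: "real \<Rightarrow> real \<Rightarrow> nat \<Rightarrow> (nat \<Rightarrow> bool) \<Rightarrow> (nat \<Rightarrow> real) \<Rightarrow> real \<Rightarrow> real" where
  "ZNtilde \<tau> \<mu> N c sg t = ZN \<tau> \<mu> N c sg t - min (ZN \<tau> \<mu> N c sg t) (real N)"

definition coin_space :: "(nat \<Rightarrow> bool) measure" where
  "coin_space = PiM UNIV (\<lambda>_. measure_pmf (bernoulli_pmf (1/2)))"

definition exp_space :: "(nat \<Rightarrow> real) measure" where
  "exp_space = PiM UNIV (\<lambda>_. density lborel (\<lambda>x. ennreal (exponential_density 1 x)))"

definition model_space :: "((nat \<Rightarrow> bool) \<times> (nat \<Rightarrow> real)) measure" where
  "model_space = coin_space \<Otimes>\<^sub>M exp_space"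

end

theory Submission
  imports Defs
begin

abbreviation Mexp :: "real measure" where
  "Mexp \<equiv> density lborel (\<lambda>x. ennreal (exponential_density 1 x))"

lemma prob_Mexp: "prob_space Mexp"
  using prob_space_exponential_density[of 1] by simp

lemma seq_Mexp: "sequence_space Mexp"
  unfolding sequence_space_def product_prob_space_def product_prob_space_axioms_def
    product_sigma_finite_def
  using prob_Mexp by (auto simp: prob_space_imp_sigma_finite)

lemma exp_space_eq: "exp_space = (\<Pi>\<^sub>M i\<in>UNIV. Mexp)"
  unfolding exp_space_def by simp

lemma nn_exp_Mexp:
  assumes l: "l \<ge> 0"
  shows "(\<integral>\<^sup>+ x. ennreal (exp (- l * x)) \<partial>Mexp) = ennreal (1 / (1 + l))"
proof -
  have "(\<integral>\<^sup>+ x. ennreal (exp (- l * x)) \<partial>Mexp) =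
      (\<integral>\<^sup>+ x. ennreal (exponential_density 1 x) * ennreal (exp (- l * x)) \<partial>lborel)"
    by (subst nn_integral_density) auto
  also have "\<dots> = (\<integral>\<^sup>+ x. ennreal (1 / (1 + l)) * ennreal (exponential_density (1 + l) x) \<partial>lborel)"
  proof (intro nn_integral_cong)
    fix x :: real
    show "ennreal (exponential_density 1 x) * ennreal (exp (- l * x)) =
          ennreal (1 / (1 + l)) * ennreal (exponential_density (1 + l) x)"
      using l by (auto simp: exponential_density_def ennreal_mult'[symmetric] exp_add[symmetric]
         algebra_simps simp del: ennreal_mult') (simp add: field_simps)
  qed
  also have "\<dots> = ennreal (1 / (1 + l)) * (\<integral>\<^sup>+ x. ennreal (exponential_density (1 + l) x) \<partial>lborel)"
    by (subst nn_integral_cmult) auto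
  also have "(\<integral>\<^sup>+ x. ennreal (exponential_density (1 + l) x) \<partial>lborel) = 1"
  proof -
    interpret prob_space "density lborel (exponential_density (1 + l))"
      using prob_space_exponential_density[of "1+l"] l by simp
    have "emeasure (density lborel (exponential_density (1 + l))) UNIV = 1"
      using emeasure_space_1 by simp
    then show ?thesis by (simp add: emeasure_density)
  qed
  finally show ?thesis by simp
qed

lemma Jt_Suc_case: "Jt (case_nat s w) (Suc k) = s + Jt w k"
  unfolding Jt_def sum.lessThan_Suc_shift by simp

lemma Jt_meas[measurable]: "(\<lambda>w. Jt w k) \<in> borel_measurable (\<Pi>\<^sub>M i\<in>UNIV. Mexp)"
  unfolding Jt_def by measurable

lemma prod_exp:
  assumes l: "l \<ge> 0"
  shows "(\<integral>\<^sup>+ w. ennreal (exp (- l * Jt w k)) \<partial>(\<Pi>\<^sub>M i\<in>UNIV. Mexp)) = ennreal ((1 / (1 + l)) ^ k)"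
proof (induction k)
  case 0
  interpret prob_space "(\<Pi>\<^sub>M i\<in>UNIV. Mexp)"
    by (rule prob_space_PiM) (rule prob_Mexp)
  show ?case by (simp add: Jt_def emeasure_space_1)
next
  case (Suc k)
  interpret S: sequence_space Mexp by (rule seq_Mexp)
  interpret Mp: prob_space Mexp by (rule prob_Mexp)
  have "(\<integral>\<^sup>+ w. ennreal (exp (- l * Jt w (Suc k))) \<partial>S.S) =
     (\<integral>\<^sup>+ w. ennreal (exp (- l * Jt w (Suc k))) \<partial>distr (Mexp \<Otimes>\<^sub>M S.S) S.S (\<lambda>(s, \<omega>). case_nat s \<omega>))"
    by (simp add: S.PiM_iter)
  also have "\<dots> = (\<integral>\<^sup>+ z. ennreal (exp (- l * Jt (case_nat (fst z) (snd z)) (Suc k))) \<partial>(Mexp \<Otimes>\<^sub>M S.S))"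
    by (subst nn_integral_distr) (auto simp: split_beta')
  also have "\<dots> = (\<integral>\<^sup>+ s. \<integral>\<^sup>+ w. ennreal (exp (- l * Jt (case_nat s w) (Suc k))) \<partial>S.S \<partial>Mexp)"
    by (subst S.nn_integral_fst[symmetric]) (auto simp: Jt_Suc_case)
  also have "\<dots> = (\<integral>\<^sup>+ s. ennreal (exp (- l * s)) * \<integral>\<^sup>+ w. ennreal (exp (- l * Jt w k)) \<partial>S.S \<partial>Mexp)"
    by (subst nn_integral_cmult[symmetric])
       (auto simp: Jt_Suc_case ennreal_mult'[symmetric] exp_add[symmetric] algebra_simps simp del: ennreal_mult' intro!: nn_integral_cong)
  also have "\<dots> = ennreal ((1 / (1 + l)) ^ k) * ennreal (1 / (1 + l))"
  proof -
    have e: "(\<integral>\<^sup>+ s. ennreal (exp (- l * s)) \<partial>Mexp) = ennreal (1 / (1 + l))"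
      by (rule nn_exp_Mexp[OF l])
    show ?thesis
      apply (subst nn_integral_multc)
       apply measurable
      apply (simp only: Suc.IH e)
      apply (rule mult.commute)
      done
  qed
  also have "\<dots> = ennreal ((1 / (1 + l)) ^ Suc k)"
    using l by (simp add: ennreal_mult'[symmetric] del: ennreal_mult')
  finally show ?case .
qed

lemma xi_bound:
  assumes mu: "\<mu> \<ge> 0" and N: "N \<ge> 1"
  shows "0 \<le> xi \<tau> \<mu> N c m j \<and> xi \<tau> \<mu> N c m j \<le> \<mu> * real N * (1 + 1 / real N) ^ m"
proof (induction m arbitrary: j)
  case 0
  then show ?case using mu by auto
next
  case (Suc m)
  define x where "x = xi \<tau> \<mu> N c m"
  define B where "B = \<mu> * real N * (1 + 1 / real N) ^ m"
  have x: "\<And>j. 0 \<le> x j \<and> x j \<le> B" using Suc.IH unfolding x_def B_def by blast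
  have B0: "0 \<le> B" using x by (meson order_trans)
  have B1: "B \<le> B * (1 + 1 / real N)" using B0 by (simp add: algebra_simps)
  have B2: "\<mu> * real N * (1 + 1 / real N) ^ Suc m = B * (1 + 1 / real N)"
    unfolding B_def by simp
  show ?case
  proof (cases "c m")
    case True
    then show ?thesis unfolding B2
      using x[of 0] x[of "j+1"] B1
      by (auto simp: theta_plus_def x_def[symmetric] intro: mult_right_mono)
  next
    case False
    have "x 0 * (1 - x (- int (Lw \<tau> N)) / (real N)^2) \<le> x 0"
      using x[of 0] x[of "- int (Lw \<tau> N)"]
      by (simp add: mult_left_le)
    then show ?thesis unfolding B2
      using False x[of 0] x[of "j+1"] B1 B0
      by (auto simp: theta_minus_def x_def[symmetric])
  qed
qed

lemma real_core:
  fixes Z B p r Nr :: real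
  assumes "0 \<le> Z" "Z \<le> B" "Nr \<ge> 1" "p \<ge> 1" "r > 0"
  shows "(Z - min Z Nr) powr p \<le> B powr (p + r) * Nr powr (- r)"
proof (cases "Z \<le> Nr")
  case True
  then show ?thesis by simp
next
  case False
  have "(Z - min Z Nr) powr p \<le> Z powr p"
    using False assms by (intro powr_mono2) auto
  also have "\<dots> \<le> Z powr p * (Z / Nr) powr r"
  proof -
    have "1 \<le> (Z / Nr) powr r" using False assms by (intro ge_one_powr_ge_zero) auto
    then have "Z powr p * 1 \<le> Z powr p * (Z / Nr) powr r" by (intro mult_left_mono) auto
    then show ?thesis by simp
  qed
  also have "\<dots> = Z powr (p + r) * Nr powr (- r)"
    using False assms by (simp add: powr_add powr_divide powr_minus divide_inverse powr_mult inverse_powr)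
  also have "\<dots> \<le> B powr (p + r) * Nr powr (- r)"
    using False assms by (intro mult_right_mono powr_mono2) auto
  finally show ?thesis .
qed

lemma pw_bound:
  assumes mu: "\<mu> \<ge> 0" and N: "N \<ge> 1" and p: "p \<ge> 1" and r: "r > 0"
  shows "ZNtilde \<tau> \<mu> N c sg s powr p \<le> \<mu> powr (p + r) * real N powr (- r) *
     exp ((p + r) / real N * real (THE n. Jt sg n \<le> real N * s \<and> real N * s < Jt sg (Suc n)))"
proof -
  define n0 where "n0 = (THE n. Jt sg n \<le> real N * s \<and> real N * s < Jt sg (Suc n))"
  define Z where "Z = ZN \<tau> \<mu> N c sg s"
  have Zeq: "Z = xi \<tau> \<mu> N c n0 (- int (Lw \<tau> N)) / real N"
    unfolding Z_def ZN_def Xc_def n0_def by simp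
  have Nr: "real N \<ge> 1" using N by simp
  have xb: "0 \<le> xi \<tau> \<mu> N c n0 (- int (Lw \<tau> N)) \<and> xi \<tau> \<mu> N c n0 (- int (Lw \<tau> N)) \<le> \<mu> * real N * (1 + 1 / real N) ^ n0"
    by (rule xi_bound[OF mu N])
  have Z0: "0 \<le> Z" using xb Nr unfolding Zeq by simp
  have "(1 + 1 / real N) ^ n0 \<le> exp (1 / real N) ^ n0"
    by (intro power_mono) auto
  also have "\<dots> = exp (real n0 / real N)"
    by (simp add: exp_of_nat_mult[symmetric])
  finally have pe: "(1 + 1 / real N) ^ n0 \<le> exp (real n0 / real N)" .
  have "Z \<le> \<mu> * (1 + 1 / real N) ^ n0"
    using xb Nr unfolding Zeq by (simp add: divide_le_eq mult.commute mult.left_commute)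
  also have "\<dots> \<le> \<mu> * exp (real n0 / real N)"
    using pe mu by (rule mult_left_mono)
  finally have ZB: "Z \<le> \<mu> * exp (real n0 / real N)" .
  have "ZNtilde \<tau> \<mu> N c sg s powr p = (Z - min Z (real N)) powr p"
    unfolding ZNtilde_def Z_def by simp
  also have "\<dots> \<le> (\<mu> * exp (real n0 / real N)) powr (p + r) * real N powr (- r)"
    by (rule real_core[OF Z0 ZB Nr p r])
  also have "(\<mu> * exp (real n0 / real N)) powr (p + r) = \<mu> powr (p + r) * exp ((p + r) / real N * real n0)"
    using mu by (simp add: powr_mult exp_powr_real)
  finally show ?thesis unfolding n0_def by (simp add: mult_ac)
qed

lemma the_bound:
  fixes sg :: "nat \<Rightarrow> real" and t \<theta> l :: real
  assumes sg: "\<And>i. sg i \<ge> 0" and t: "t \<ge> 0" and th: "\<theta> \<ge> 0" and l: "l \<ge> 0"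
  shows "ennreal (exp (\<theta> * real (THE n. Jt sg n \<le> t \<and> t < Jt sg (Suc n))))
     \<le> (\<Sum>k. ennreal (exp (\<theta> * real k) * exp (l * (t - Jt sg k))))"
proof (cases "\<exists>!n. Jt sg n \<le> t \<and> t < Jt sg (Suc n)")
  case True
  then obtain n where n: "Jt sg n \<le> t \<and> t < Jt sg (Suc n)" by blast
  have eq: "(THE n. Jt sg n \<le> t \<and> t < Jt sg (Suc n)) = n"
    using True n by (rule the1_equality)
  have "ennreal (exp (\<theta> * real n)) \<le> ennreal (exp (\<theta> * real n) * exp (l * (t - Jt sg n)))"
    using n l by (intro ennreal_leI) auto
  also have "\<dots> = (\<Sum>k\<in>{n}. ennreal (exp (\<theta> * real k) * exp (l * (t - Jt sg k))))" by simp
  also have "\<dots> \<le> (\<Sum>k. ennreal (exp (\<theta> * real k) * exp (l * (t - Jt sg k))))"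
    by (intro sum_le_suminf) auto
  finally show ?thesis unfolding eq .
next
  case False
  have mono: "Jt sg i \<le> Jt sg j" if "i \<le> j" for i j
    unfolding Jt_def using that sg by (intro sum_mono2) auto
  have all: "Jt sg k \<le> t" for k
  proof (rule ccontr)
    assume "\<not> Jt sg k \<le> t"
    then have ex: "\<exists>k. t < Jt sg k" by (auto simp: not_le)
    define m where "m = (LEAST k. t < Jt sg k)"
    have m: "t < Jt sg m" unfolding m_def using ex by (rule LeastI_ex)
    have m0: "m \<noteq> 0" using m t by (cases m) (auto simp: Jt_def)
    then obtain n where mn: "m = Suc n" by (cases m) auto
    have "\<not> t < Jt sg n" using mn unfolding m_def
      by (metis Least_le lessI not_le)
    then have P: "Jt sg n \<le> t \<and> t < Jt sg (Suc n)" using m mn by auto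
    have "\<exists>!n. Jt sg n \<le> t \<and> t < Jt sg (Suc n)"
    proof (rule ex1I[of _ n])
      show "Jt sg n \<le> t \<and> t < Jt sg (Suc n)" by (rule P)
      fix n' assume P': "Jt sg n' \<le> t \<and> t < Jt sg (Suc n')"
      show "n' = n"
      proof (rule ccontr)
        assume "n' \<noteq> n"
        then have "Suc n' \<le> n \<or> Suc n \<le> n'" by auto
        then show False using mono[of "Suc n'" n] mono[of "Suc n" n'] P P' by auto
      qed
    qed
    then show False using False by blast
  qed
  have "(\<Sum>k. ennreal (exp (\<theta> * real k) * exp (l * (t - Jt sg k)))) = top"
  proof (rule ccontr)
    assume "(\<Sum>k. ennreal (exp (\<theta> * real k) * exp (l * (t - Jt sg k)))) \<noteq> top"
    then have "summable (\<lambda>k. exp (\<theta> * real k) * exp (l * (t - Jt sg k)))"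
      by (intro summable_suminf_not_top) auto
    then have "(\<lambda>k. exp (\<theta> * real k) * exp (l * (t - Jt sg k))) \<longlonglongrightarrow> 0"
      by (rule summable_LIMSEQ_zero)
    moreover have "1 \<le> exp (\<theta> * real k) * exp (l * (t - Jt sg k))" for k
    proof -
      have "1 \<le> exp (\<theta> * real k)" using th by auto
      moreover have "1 \<le> exp (l * (t - Jt sg k))" using all[of k] l by auto
      ultimately show ?thesis by (metis mult_mono' one_le_exp_iff zero_le_one mult_1)
    qed
    ultimately have "1 \<le> (0::real)" by (intro LIMSEQ_le_const[of _ 0 1]) auto
    then show False by simp
  qed
  then show ?thesis by simp
qed

lemma expm1_le: "x \<ge> 0 \<Longrightarrow> exp x - 1 \<le> x * exp (x::real)"
proof -
  assume x: "x \<ge> 0"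
  have "1 + (- x) \<le> exp (- x)" by (rule exp_ge_add_one_self)
  then have "(1 - x) * exp x \<le> exp (- x) * exp x" by (intro mult_right_mono) auto
  then have "exp x - x * exp x \<le> 1" by (simp add: algebra_simps exp_minus_inverse)
  then show ?thesis by simp
qed

lemma real_final:
  fixes p q r a Nr s T \<mu> :: real
  assumes p: "p \<ge> 1" and q: "q \<ge> 1" and r: "r = q / 2 + 1" and a: "a = p + r"
    and Nr: "Nr \<ge> 1" and s: "0 \<le> s" "s \<le> T" and mu: "\<mu> \<ge> 0"
  shows "\<mu> powr a * Nr powr (- r) * exp ((exp (2 * (a / Nr)) - 1) * (Nr * s)) / (1 - exp (- (a / Nr)))
     \<le> (\<mu> powr a * exp (2 * a * exp (2 * a) * T) * (1 + 1 / a) + 1) * Nr powr (- q / 2)"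
proof -
  define \<theta> where "\<theta> = a / Nr"
  have a0: "a > 0" using p q r a by simp
  have th0: "\<theta> > 0" unfolding \<theta>_def using a0 Nr by simp
  have tha: "\<theta> \<le> a" unfolding \<theta>_def using a0 Nr by (simp add: divide_le_eq mult_le_cancel_left1 less_le_not_le)
  have h1: "exp (2 * \<theta>) - 1 \<le> 2 * \<theta> * exp (2 * \<theta>)" using th0 by (intro expm1_le) simp
  have "(exp (2 * \<theta>) - 1) * (Nr * s) \<le> 2 * \<theta> * exp (2 * \<theta>) * (Nr * s)"
    using h1 Nr s by (intro mult_right_mono) auto
  also have "\<dots> = 2 * a * exp (2 * \<theta>) * s" unfolding \<theta>_def using Nr by simp
  also have "\<dots> \<le> 2 * a * exp (2 * a) * T"
    using a0 s tha by (intro mult_mono) auto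
  finally have h2: "exp ((exp (2 * \<theta>) - 1) * (Nr * s)) \<le> exp (2 * a * exp (2 * a) * T)" by simp
  have e1: "1 + \<theta> \<le> exp \<theta>" by (rule exp_ge_add_one_self)
  have pos: "0 < 1 - exp (- \<theta>)" using th0 by simp
  have "1 / (1 - exp (- \<theta>)) \<le> 1 + 1 / \<theta>"
  proof -
    have "exp (- \<theta>) \<le> 1 / (1 + \<theta>)"
      using e1 th0 by (simp add: exp_minus_inverse exp_minus field_simps)
    then have "\<theta> / (1 + \<theta>) \<le> 1 - exp (- \<theta>)" using th0 by (simp add: field_simps)
    then have "1 / (1 - exp (- \<theta>)) \<le> 1 / (\<theta> / (1 + \<theta>))"
      using th0 by (intro divide_left_mono) auto
    then show ?thesis using th0 by (simp add: field_simps)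
  qed
  also have "1 + 1 / \<theta> = 1 + Nr / a" unfolding \<theta>_def by simp
  also have "\<dots> \<le> Nr * (1 + 1 / a)" using Nr a0 by (simp add: field_simps)
  finally have h3: "1 / (1 - exp (- \<theta>)) \<le> Nr * (1 + 1 / a)" .
  have "\<mu> powr a * Nr powr (- r) * exp ((exp (2 * \<theta>) - 1) * (Nr * s)) / (1 - exp (- \<theta>))
     = (\<mu> powr a * Nr powr (- r)) * exp ((exp (2 * \<theta>) - 1) * (Nr * s)) * (1 / (1 - exp (- \<theta>)))"
    by simp
  also have "\<dots> \<le> (\<mu> powr a * Nr powr (- r)) * exp (2 * a * exp (2 * a) * T) * (Nr * (1 + 1 / a))"
    using h2 h3 pos by (intro mult_mono) auto
  also have "\<dots> = \<mu> powr a * exp (2 * a * exp (2 * a) * T) * (1 + 1 / a) * (Nr powr (- r) * Nr)"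
    by (simp add: mult_ac)
  also have "Nr powr (- r) * Nr = Nr powr (- q / 2)"
  proof -
    have "Nr powr (- r) * Nr = Nr powr (- r) * Nr powr 1" using Nr by simp
    also have "\<dots> = Nr powr (- r + 1)" by (simp only: powr_add)
    finally show ?thesis using r by simp
  qed
  also have "\<mu> powr a * exp (2 * a * exp (2 * a) * T) * (1 + 1 / a) * Nr powr (- q / 2)
     \<le> (\<mu> powr a * exp (2 * a * exp (2 * a) * T) * (1 + 1 / a) + 1) * Nr powr (- q / 2)"
    by (intro mult_right_mono) auto
  finally show ?thesis unfolding \<theta>_def .
qed

lemma Jt_meas'[measurable]: "(\<lambda>w. Jt w k) \<in> borel_measurable exp_space"
  unfolding exp_space_eq by (rule Jt_meas)

lemma coord_meas[measurable]: "(\<lambda>sg. sg i) \<in> borel_measurable exp_space"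
proof -
  have 1: "(\<lambda>sg. sg i) \<in> measurable exp_space Mexp"
    unfolding exp_space_eq by (rule measurable_component_singleton) simp
  have 2: "measurable exp_space Mexp = measurable exp_space borel"
    by (rule measurable_cong_sets) auto
  show ?thesis using 1 unfolding 2 .
qed

lemma pred_nonneg[measurable]: "Measurable.pred exp_space (\<lambda>sg. \<forall>i. 0 \<le> sg i)"
  using coord_meas by (intro pred_intros_countable allI) measurable

lemma prob_coin: "prob_space coin_space"
  unfolding coin_space_def by (intro prob_space_PiM prob_space_measure_pmf)

lemma prob_expsp: "prob_space exp_space"
  unfolding exp_space_eq by (intro prob_space_PiM prob_Mexp)

lemma AE_nonneg: "AE sg in exp_space. \<forall>i. 0 \<le> sg i"
proof -
  have "AE x in Mexp. 0 \<le> x"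
    by (subst AE_density) (auto simp: exponential_density_def)
  then show ?thesis
    unfolding exp_space_eq
    by (intro AE_all_countable[THEN iffD2] allI AE_PiM_component[of UNIV "\<lambda>_. Mexp"]) (auto simp: prob_Mexp)
qed

lemma int_G:
  fixes l \<theta> t :: real
  assumes l: "1 + l = exp (2 * \<theta>)" and th: "\<theta> > 0"
  shows "(\<integral>\<^sup>+ sg. (\<Sum>k. ennreal (exp (\<theta> * real k) * exp (l * (t - Jt sg k)))) \<partial>exp_space)
     = ennreal (exp (l * t) / (1 - exp (- \<theta>)))"
proof -
  have l0: "l \<ge> 0" using l th by (metis add_le_cancel_left add.right_neutral one_le_exp_iff mult_pos_pos zero_less_numeral less_imp_le)
  have k: "(\<integral>\<^sup>+ sg. ennreal (exp (\<theta> * real k) * exp (l * (t - Jt sg k))) \<partial>exp_space)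
      = ennreal (exp (l * t) * exp (- \<theta>) ^ k)" for k
  proof -
    have "(\<integral>\<^sup>+ sg. ennreal (exp (\<theta> * real k) * exp (l * (t - Jt sg k))) \<partial>exp_space)
      = (\<integral>\<^sup>+ sg. ennreal (exp (\<theta> * real k) * exp (l * t)) * ennreal (exp (- l * Jt sg k)) \<partial>exp_space)"
      by (intro nn_integral_cong)
         (simp add: ennreal_mult'[symmetric] exp_add[symmetric] algebra_simps del: ennreal_mult')
    also have "\<dots> = ennreal (exp (\<theta> * real k) * exp (l * t)) * ennreal ((1 / (1 + l)) ^ k)"
      unfolding exp_space_eq
      apply (subst nn_integral_cmult)
       apply measurable
      apply (subst prod_exp[OF l0])
      apply (rule refl)
      done
    also have "\<dots> = ennreal (exp (\<theta> * real k) * exp (l * t) * (1 / (1 + l)) ^ k)"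
      by (simp add: ennreal_mult'[symmetric] del: ennreal_mult')
    also have "exp (\<theta> * real k) * exp (l * t) * (1 / (1 + l)) ^ k = exp (l * t) * exp (- \<theta>) ^ k"
    proof -
      have "exp (\<theta> * real k) * (1 / (1 + l)) ^ k = (exp \<theta> * exp (- (2 * \<theta>))) ^ k"
        unfolding l by (simp add: exp_of_nat_mult[symmetric] mult.commute power_mult_distrib exp_minus divide_inverse power_inverse)
      also have "exp \<theta> * exp (- (2 * \<theta>)) = exp (- \<theta>)" by (simp add: exp_add[symmetric])
      finally show ?thesis by (simp add: mult_ac)
    qed
    finally show ?thesis .
  qed
  have "(\<integral>\<^sup>+ sg. (\<Sum>k. ennreal (exp (\<theta> * real k) * exp (l * (t - Jt sg k)))) \<partial>exp_space)
      = (\<Sum>k. \<integral>\<^sup>+ sg. ennreal (exp (\<theta> * real k) * exp (l * (t - Jt sg k))) \<partial>exp_space)"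
    by (rule nn_integral_suminf) measurable
  also have "\<dots> = (\<Sum>k. ennreal (exp (l * t) * exp (- \<theta>) ^ k))" by (simp only: k)
  also have "\<dots> = ennreal (\<Sum>k. exp (l * t) * exp (- \<theta>) ^ k)"
    using th by (intro suminf_ennreal2) (auto intro!: summable_mult summable_geometric)
  also have "(\<Sum>k. exp (l * t) * exp (- \<theta>) ^ k) = exp (l * t) / (1 - exp (- \<theta>))"
    using th by (subst suminf_mult) (auto simp: suminf_geometric divide_inverse)
  finally show ?thesis .
qed

theorem lemma3p3:
  fixes \<tau> \<mu> T :: real
  assumes "\<tau> > 0" and "\<mu> \<ge> 0" and "T > 0"
  shows "\<forall>p::real \<ge> 1. \<forall>q::real \<ge> 1. \<exists>C::real > 0. \<forall>N::nat. \<forall>s \<in> {0..T}. N \<ge> 1 \<longrightarrow>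
           (\<integral>\<^sup>+ \<omega>. ennreal ((ZNtilde \<tau> \<mu> N (fst \<omega>) (snd \<omega>) s) powr p) \<partial>model_space)
             \<le> ennreal (C * real N powr (- q / 2))"
proof (intro allI impI)
  fix p q :: real
  assume p: "p \<ge> 1" and q: "q \<ge> 1"
  have mu: "\<mu> \<ge> 0" by fact
  define r where "r = q / 2 + 1"
  define a where "a = p + r"
  define C where "C = \<mu> powr a * exp (2 * a * exp (2 * a) * T) * (1 + 1 / a) + 1"
  have r0: "r > 0" unfolding r_def using q by simp
  have a0: "a > 0" unfolding a_def using p r0 by simp
  have C0: "C > 0" unfolding C_def using a0 by (intro add_nonneg_pos mult_nonneg_nonneg) auto
  show "\<exists>C>0. \<forall>N::nat. \<forall>s\<in>{0..T}. N \<ge> 1 \<longrightarrow>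
           (\<integral>\<^sup>+ \<omega>. ennreal ((ZNtilde \<tau> \<mu> N (fst \<omega>) (snd \<omega>) s) powr p) \<partial>model_space)
             \<le> ennreal (C * real N powr (- q / 2))"
  proof (intro exI[of _ C] conjI C0 allI ballI impI)
    fix N :: nat and s :: real
    assume s: "s \<in> {0..T}" and N: "N \<ge> 1"
    define Nr where "Nr = real N"
    have Nr: "Nr \<ge> 1" unfolding Nr_def using N by simp
    define \<theta> where "\<theta> = a / Nr"
    define l where "l = exp (2 * \<theta>) - 1"
    define t where "t = Nr * s"
    define K where "K = \<mu> powr a * Nr powr (- r)"
    have th0: "\<theta> > 0" unfolding \<theta>_def using a0 Nr by simp
    have l0: "l \<ge> 0" unfolding l_def using th0 by simp
    have t0: "t \<ge> 0" unfolding t_def using Nr s by simp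
    have K0: "K \<ge> 0" unfolding K_def by simp
    define S where "S = (\<lambda>sg. (\<Sum>k. ennreal (exp (\<theta> * real k) * exp (l * (t - Jt sg k)))))"
    define G where "G = (\<lambda>sg::nat \<Rightarrow> real. if (\<forall>i. 0 \<le> sg i) then ennreal K * S sg else top)"
    have Gm: "G \<in> borel_measurable exp_space"
      unfolding G_def S_def by measurable
    have pw: "ennreal ((ZNtilde \<tau> \<mu> N c sg s) powr p) \<le> G sg" for c sg
    proof (cases "\<forall>i. 0 \<le> sg i")
      case True
      define n0 where "n0 = (THE n. Jt sg n \<le> real N * s \<and> real N * s < Jt sg (Suc n))"
      have "ennreal ((ZNtilde \<tau> \<mu> N c sg s) powr p) \<le> ennreal (K * exp (\<theta> * real n0))"
        using pw_bound[OF mu N p r0, of \<tau> c sg s]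
        unfolding K_def \<theta>_def a_def n0_def Nr_def by (intro ennreal_leI) simp
      also have "\<dots> = ennreal K * ennreal (exp (\<theta> * real n0))"
        using K0 by (simp add: ennreal_mult)
      also have "\<dots> \<le> ennreal K * S sg"
        unfolding S_def n0_def t_def Nr_def
        using True t0 th0 l0 unfolding t_def Nr_def
        by (intro mult_left_mono the_bound) auto
      finally show ?thesis unfolding G_def using True by simp
    next
      case False
      then show ?thesis unfolding G_def by (subst if_not_P) auto
    qed
    interpret E: prob_space exp_space by (rule prob_expsp)
    interpret Cn: prob_space coin_space by (rule prob_coin)
    have "(\<integral>\<^sup>+ \<omega>. ennreal ((ZNtilde \<tau> \<mu> N (fst \<omega>) (snd \<omega>) s) powr p) \<partial>model_space)
        \<le> (\<integral>\<^sup>+ \<omega>. G (snd \<omega>) \<partial>model_space)"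
      by (intro nn_integral_mono) (simp add: pw)
    also have "\<dots> = (\<integral>\<^sup>+ c. \<integral>\<^sup>+ sg. G sg \<partial>exp_space \<partial>coin_space)"
      unfolding model_space_def
      by (subst E.nn_integral_fst[symmetric]) (auto intro: measurable_compose[OF measurable_snd Gm])
    also have "(\<integral>\<^sup>+ sg. G sg \<partial>exp_space) = (\<integral>\<^sup>+ sg. ennreal K * S sg \<partial>exp_space)"
      by (intro nn_integral_cong_AE) (use AE_nonneg in \<open>auto simp: G_def\<close>)
    also have "\<dots> = ennreal K * (\<integral>\<^sup>+ sg. S sg \<partial>exp_space)"
      by (rule nn_integral_cmult) (unfold S_def, measurable)
    also have "(\<integral>\<^sup>+ sg. S sg \<partial>exp_space) = ennreal (exp (l * t) / (1 - exp (- \<theta>)))"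
      unfolding S_def by (rule int_G) (use th0 in \<open>auto simp: l_def\<close>)
    also have "(\<integral>\<^sup>+ c. ennreal K * ennreal (exp (l * t) / (1 - exp (- \<theta>))) \<partial>coin_space)
        = ennreal K * ennreal (exp (l * t) / (1 - exp (- \<theta>)))"
      by (simp add: Cn.emeasure_space_1)
    also have "\<dots> = ennreal (\<mu> powr a * Nr powr (- r) * exp ((exp (2 * (a / Nr)) - 1) * (Nr * s)) / (1 - exp (- (a / Nr))))"
      using K0 unfolding K_def l_def t_def \<theta>_def by (simp add: ennreal_mult'[symmetric] del: ennreal_mult')
    also have "\<dots> \<le> ennreal (C * real N powr (- q / 2))"
      unfolding C_def Nr_def[symmetric]
      by (intro ennreal_leI real_final[OF p q r_def a_def Nr]) (use s mu in auto)
    finally show "(\<integral>\<^sup>+ \<omega>. ennreal ((ZNtilde \<tau> \<mu> N (fst \<omega>) (snd \<omega>) s) powr p) \<partial>model_space)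
             \<le> ennreal (C * real N powr (- q / 2))" .
  qed
qed

end
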